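(* Under the standing assumptions, $\tau(\theta)>0$ for every $\theta\in(\pi/2,\pi)$.
   Context: Standing assumptions: $a,b\in\mathbb{R}$ with $b>0$, $1+a+b>0$, $9-27a+b>0$, $2-8a+8a^2+ab\ne0$, $b+1-a\ne0$. Let $f^*(\zeta,\theta)=(\zeta+2\cos\theta)(2\zeta\cos\theta+1)+b\zeta-a(\zeta+2\cos\theta)^3$ and $f(\zeta,\theta)=\zeta^3f^*(1/\zeta,\theta)=\zeta(1+2\zeta\cos\theta)(2\cos\theta+\zeta)+b\zeta^2-a(1+2\zeta\cos\theta)^3$. Under these assumptions, for each $\theta\in(\pi/2,\pi)$ the polynomial $f^*(\cdot,\theta)$ has exactly one real zero in $(-1,1)$; denote it $w(\theta)$ and write $\zeta(\theta)=1/w(\theta)$ (taken as $\infty$ when $w(\theta)=0$). Define $\tau(\theta)=-w(\theta)-2\cos\theta$. *)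

theory Defs
  imports "HOL-Analysis.Analysis"
begin

definition fstar :: "real \<Rightarrow> real \<Rightarrow> real \<Rightarrow> real \<Rightarrow> real" where
  "fstar a b z \<theta> = (z + 2 * cos \<theta>) * (2 * z * cos \<theta> + 1) + b * z - a * (z + 2 * cos \<theta>) ^ 3"

text \<open>The unique real zero of fstar in the open interval (-1,1) (exists under the standing assumptions).\<close>
definition wzero :: "real \<Rightarrow> real \<Rightarrow> real \<Rightarrow> real" where
  "wzero a b \<theta> = (THE w. w \<in> {-1<..<1} \<and> fstar a b w \<theta> = 0)"

definition tau :: "real \<Rightarrow> real \<Rightarrow> real \<Rightarrow> real" where
  "tau a b \<theta> = - wzero a b \<theta> - 2 * cos \<theta>"

end

theory Submission imports Defs begin
lemma fstar_poly: "fstar a b z t = (-a) * z^3 + (2*cos t - 6*a*cos t) * z^2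
   + (4*(cos t)^2 + 1 + b - 12*a*(cos t)^2) * z + (2*cos t - 8*a*(cos t)^3)"
  unfolding fstar_def by (simp add: algebra_simps power2_eq_square power3_eq_cube)

lemma pos_region:
  fixes a b c u :: real
  assumes b: "b > 0" and ab: "a < 1 + b" and c: "-1/2 < c" "c < 0"
    and u: "0 \<le> u" "u < 2*c + 1"
  shows "-a*u^3 + 2*c*u^2 + (1+b-4*c^2)*u - 2*b*c > 0"
proof -
  define d where "d = -c"
  have d: "0 < d" "d < 1/2" using c d_def by auto
  have u1: "u < 1 - 2*d" using u d_def by auto
  have uu: "u < 1" using u1 d by auto
  have u3: "u^3 \<le> u" using u uu
    by (metis less_eq_real_def power_le_one power_one_right power_decreasing zero_less_numeral one_le_numeral)
  have A: "a*u^3 \<le> (1+b)*u - (1+b)*(u - u^3)"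
  proof (cases "a \<le> 0")
    case True
    have "a*u^3 \<le> 0" using True u by (simp add: mult_nonpos_nonneg)
    moreover have "0 \<le> (1+b)*u^3" using b u by simp
    ultimately show ?thesis by (simp add: algebra_simps)
  next
    case False
    have "a*u^3 \<le> (1+b)*u^3" using ab u by (intro mult_right_mono) auto
    then show ?thesis by (simp add: algebra_simps)
  qed
  have key: "u^2 + 2*d*u + 4*d^2 < 1"
  proof -
    have "u*(u+2*d) \<le> (1-2*d)*1"
      using u1 u d by (intro mult_mono) auto
    moreover have "d*(2*d) < d*1" using d by (intro mult_strict_left_mono) auto
    ultimately show ?thesis by (simp add: power2_eq_square algebra_simps)
  qed
  have t1: "u*(u^2 + 2*d*u + 4*d^2) \<le> u" using key u
    by (metis less_eq_real_def mult_left_mono mult.right_neutral)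
  have t2: "b*(u - u^3) \<ge> 0" using b u3 by simp
  have "-a*u^3 + 2*c*u^2 + (1+b-4*c^2)*u - 2*b*c
      \<ge> (u - u^3 - 2*d*u^2 - 4*d^2*u) + (b*(u-u^3) + 2*b*d)"
    using A d_def by (simp add: algebra_simps power2_eq_square power3_eq_cube)
  moreover have "u - u^3 - 2*d*u^2 - 4*d^2*u \<ge> 0"
    using t1 by (simp add: algebra_simps power2_eq_square power3_eq_cube)
  moreover have "2*b*d > 0" using b d by simp
  ultimately show ?thesis using t2 by linarith
qed


lemma fstar_u: "fstar a b z t = -a*(z + 2*cos t)^3 + 2*cos t*(z+2*cos t)^2 + (1+b-4*(cos t)^2)*(z+2*cos t) - 2*b*cos t"
  unfolding fstar_def by (simp add: algebra_simps power2_eq_square power3_eq_cube)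

lemma zero_neg:
  fixes a b c z :: real
  assumes b: "b > 0" and ab: "a < 1 + b" and c: "c = cos t" "-1 < c" "c < 0"
    and z: "-1 < z" "z < 1" and f: "fstar a b z t = 0"
  shows "z + 2*c < 0"
proof (rule ccontr)
  assume "\<not> z + 2*c < 0"
  then have u: "0 \<le> z + 2*c" "z + 2*c < 2*c+1" using z by auto
  then have "-1/2 < c" by auto
  from pos_region[OF b ab this \<open>c<0\<close> u] f show False
    unfolding fstar_u c(1) by simp
qed

lemma left_neg:
  fixes a b c :: real
  assumes b: "b > 0" and h: "9 - 27*a + b > 0" and c: "c = cos t" "-1 < c" "c < 0"
  shows "fstar a b (-1) t < 0"
proof -
  define w where "w = 1 - 2*c"
  have w: "1 < w" "w < 3" using c w_def by auto
  have e: "fstar a b (-1) t = a*w^3 - w^2 - b"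
    unfolding fstar_def w_def c(1) by (simp add: algebra_simps power2_eq_square power3_eq_cube)
  have "a*w^3 < w^2 + b"
  proof (cases "a \<le> 0")
    case True
    then have "a*w^3 \<le> 0" using w by (simp add: mult_nonpos_nonneg)
    moreover have "0 \<le> w^2" by simp
    ultimately show ?thesis using b by linarith
  next
    case False
    have s2: "w^2 < 9"
    proof -
      have "w*w < 3*3" using w by (intro mult_strict_mono) auto
      then show ?thesis by (simp add: power2_eq_square)
    qed
    have "a*w^3 = (a*w)*w^2" by (simp add: power2_eq_square power3_eq_cube)
    also have "\<dots> \<le> (3*a)*w^2" using False w by (intro mult_right_mono) auto
    also have "\<dots> \<le> (1 + b/9)*w^2" using h by (intro mult_right_mono) auto
    also have "\<dots> = w^2 + b*(w^2/9)" by (simp add: algebra_simps)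
    also have "\<dots> < w^2 + b" using b s2 w
    proof -
      have "w^2/9 < 1" using s2 w by simp
      then have "b*(w^2/9) < b*1" using b by (intro mult_strict_left_mono) auto
      then show ?thesis by simp
    qed
    finally show ?thesis .
  qed
  then show ?thesis using e by simp
qed

lemma right_pos:
  fixes a b c :: real
  assumes b: "b > 0" and ab: "a < 1 + b" "1 + a + b > 0" and c: "c = cos t" "-1 < c" "c < 0"
  shows "fstar a b 1 t > 0"
proof -
  define w where "w = 1 + 2*c"
  have w: "-1 < w" "w < 1" using c w_def by auto
  have e: "fstar a b 1 t = w^2 + b - a*w^3"
    unfolding fstar_def w_def c(1) by (simp add: algebra_simps power2_eq_square power3_eq_cube)
  have as: "\<bar>a\<bar> < 1 + b" using ab by auto
  have "a*w^3 \<le> \<bar>a\<bar>*\<bar>w\<bar>^3" by (metis abs_ge_self abs_mult power_abs)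
  also have "\<dots> \<le> \<bar>a\<bar>*w^2"
  proof -
    have "\<bar>w\<bar>^3 \<le> \<bar>w\<bar>^2" using w by (intro power_decreasing) auto
    then show ?thesis by (simp add: mult_left_mono)
  qed
  also have "\<dots> \<le> (1+b)*w^2" using as by (intro mult_right_mono) auto
  also have "\<dots> < w^2 + b"
  proof -
    have "w^2 < 1" using w by (simp add: abs_square_less_1 abs_less_iff)
    then have "b*w^2 < b*1" using b by (intro mult_strict_left_mono) auto
    then show ?thesis by (simp add: algebra_simps)
  qed
  finally show ?thesis using e by simp
qed


lemma cub: fixes A B C D z y :: real shows "(A*z^3+B*z^2+C*z+D) - (A*y^3+B*y^2+C*y+D) = (z-y)*(A*(z^2+z*y+y^2)+B*(z+y)+C)"
  by (simp add: algebra_simps power2_eq_square power3_eq_cube)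
lemma qua: fixes A B C z y x :: real shows "(A*(z^2+z*x+x^2)+B*(z+x)+C) - (A*(y^2+y*x+x^2)+B*(y+x)+C) = (z-y)*(A*(z+x+y)+B)"
  by (simp add: algebra_simps power2_eq_square)

lemma two_roots_false:
  fixes a b c z1 z2 :: real
  assumes b: "b > 0" and ab: "a < 1 + b" "1 + a + b > 0" and h: "9 - 27*a + b > 0"
    and c: "c = cos t" "-1 < c" "c < 0"
    and z1: "-1 < z1" "z1 < 1" "fstar a b z1 t = 0"
    and z2: "-1 < z2" "z2 < 1" "fstar a b z2 t = 0"
    and ne: "z1 < z2"
  shows False
proof -
  define A where "A = -a"
  define B where "B = 2*c - 6*a*c"
  define C where "C = 4*c^2 + 1 + b - 12*a*c^2"
  define D where "D = 2*c - 8*a*c^3"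
  have F: "\<And>z. fstar a b z t = A*z^3 + B*z^2 + C*z + D"
    using fstar_poly[of a b _ t] unfolding A_def B_def C_def D_def c(1) by simp
  define Q where "Q z = A*(z^2+z*z1+z1^2)+B*(z+z1)+C" for z
  have FQ: "fstar a b z t = (z - z1)*Q z" for z
  proof -
    have "fstar a b z t = fstar a b z t - fstar a b z1 t" using z1 by simp
    also have "\<dots> = (z - z1)*Q z" unfolding F Q_def by (rule cub)
    finally show ?thesis .
  qed
  have Q2: "Q z2 = 0" using FQ[of z2] z2 ne by simp
  define L where "L z = A*(z+z1+z2)+B" for z
  have QL: "Q z = (z - z2) * L z" for z
  proof -
    have "Q z = Q z - Q z2" using Q2 by simp
    also have "\<dots> = (z - z2)*L z" unfolding Q_def L_def by (rule qua)
    finally show ?thesis .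
  qed
  have FL: "fstar a b z t = (z - z1)*(z - z2)*L z" for z using FQ QL by simp
  have p1': "0 < (-1 - z1)*(-1 - z2)" using z1 z2 by (simp add: mult_neg_neg)
  have p2: "0 < (1 - z1)*(1 - z2)" using z1 z2 by simp
  have Lm: "L (-1) < 0"
  proof -
    have "(-1 - z1)*(-1 - z2)*L (-1) < 0" using FL[of "-1"] left_neg[OF b h c] by simp
    then show ?thesis using p1' z1 z2 by (simp add: mult_less_0_iff)
  qed
  have Lp: "L 1 > 0"
  proof -
    have "(1 - z1)*(1 - z2)*L 1 > 0" using FL[of "1"] right_pos[OF b ab c] by simp
    then show ?thesis using p2 by (simp add: zero_less_mult_iff)
  qed
  have Lm': "A*(-1) + A*(z1+z2) + B < 0" using Lm unfolding L_def by (simp only: distrib_left)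
  have Lp': "A*1 + A*(z1+z2) + B > 0" using Lp unfolding L_def by (simp only: distrib_left)
  have Apos: "A > 0" using Lm' Lp' by linarith
  define r where "r = -(z1+z2) - B/A"
  have Ar: "A*r = -(A*(z1+z2)) - B"
  proof -
    have "A*r = A*(-(z1+z2)) - A*(B/A)" unfolding r_def by (rule right_diff_distrib)
    also have "A*(B/A) = B" using Apos by simp
    finally show ?thesis by (simp add: algebra_simps)
  qed
  have e1: "L r = A*r + A*(z1+z2) + B" unfolding L_def by (simp add: algebra_simps)
  have e2: "L (-1) - A*(-1 - r) = A*r + A*(z1+z2) + B" unfolding L_def by (simp add: algebra_simps)
  have e3: "L 1 - A*(1 - r) = A*r + A*(z1+z2) + B" unfolding L_def by (simp add: algebra_simps)
  have Lr: "L r = 0" using Ar e1 by linarith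
  have Lr1a: "L (-1) = A*(-1 - r)" using Ar e2 by linarith
  have Lr1b: "L 1 = A*(1 - r)" using Ar e3 by linarith
  note Lr1 = Lr1a Lr1b
  have r: "-1 < r" "r < 1"
  proof -
    have "A*(-1 - r) < 0" using Lm Lr1 by simp
    then have "-1 - r < 0" using Apos by (simp add: mult_less_0_iff)
    then show "-1 < r" by simp
    have "A*(1 - r) > 0" using Lp Lr1 by simp
    then have "1 - r > 0" using Apos by (simp add: zero_less_mult_iff)
    then show "r < 1" by simp
  qed
  have fr: "fstar a b r t = 0" using FL[of r] Lr by simp
  have n1: "z1 + 2*c < 0" by (rule zero_neg[OF b ab(1) c z1])
  have n2: "z2 + 2*c < 0" by (rule zero_neg[OF b ab(1) c z2])
  have n3: "r + 2*c < 0" by (rule zero_neg[OF b ab(1) c r fr])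
  have "A*(z1+z2+r+6*c) = A*(z1+z2) + A*r + 6*c*A" by (simp add: algebra_simps)
  also have "\<dots> = -2*c" using Ar unfolding A_def B_def by (simp add: algebra_simps)
  finally have "A*(z1+z2+r+6*c) = -2*c" .
  moreover have "A*(z1+z2+r+6*c) < 0" using Apos n1 n2 n3 by (simp add: mult_pos_neg)
  ultimately show False using c by linarith
qed

theorem mainTheorem10:
  fixes a b \<theta> :: real
  assumes "b > 0" and "1 + a + b > 0" and "9 - 27 * a + b > 0"
    and "2 - 8 * a + 8 * a ^ 2 + a * b \<noteq> 0" and "b + 1 - a \<noteq> 0"
    and "\<theta> \<in> {pi/2<..<pi}"
  shows "tau a b \<theta> > 0"
proof -
  define c where "c = cos \<theta>"
  have th: "pi/2 < \<theta>" "\<theta> < pi" using assms(6) by auto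
  have "cos \<theta> < cos (pi/2)" using th pi_gt_zero by (subst cos_mono_less_eq) auto
  moreover have "cos pi < cos \<theta>" using th pi_gt_zero by (subst cos_mono_less_eq) auto
  ultimately have c: "c = cos \<theta>" "-1 < c" "c < 0" unfolding c_def by auto
  have ab: "a < 1 + b" using assms(1) assms(3) by linarith
  have cont: "continuous_on {-1..1} (\<lambda>z. fstar a b z \<theta>)"
    unfolding fstar_def by (intro continuous_intros)
  have fl: "fstar a b (-1) \<theta> < 0" by (rule left_neg[OF assms(1) assms(3) c])
  have fr: "fstar a b 1 \<theta> > 0" by (rule right_pos[OF assms(1) ab assms(2) c])
  obtain z where z: "-1 \<le> z" "z \<le> 1" "fstar a b z \<theta> = 0"
  proof -
    have "\<exists>x. -1 \<le> x \<and> x \<le> 1 \<and> fstar a b x \<theta> = 0"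
      by (rule IVT'[of "\<lambda>z. fstar a b z \<theta>" "-1" 0 1]) (use fl fr cont in auto)
    then show ?thesis using that by blast
  qed
  have "z \<noteq> -1" using fl z(3) by auto
  moreover have "z \<noteq> 1" using fr z(3) by auto
  ultimately have zi: "-1 < z" "z < 1" using z(1,2) by linarith+
  have uniq: "y = z" if "y \<in> {-1<..<1}" "fstar a b y \<theta> = 0" for y
  proof (rule ccontr)
    assume "y \<noteq> z"
    then consider "y < z" | "z < y" by linarith
    then show False
    proof cases
      case 1
      have "-1 < y" "y < 1" using that(1) by auto
      from two_roots_false[OF assms(1) ab assms(2) assms(3) c this that(2) zi z(3) 1] show False .
    next
      case 2
      have "-1 < y" "y < 1" using that(1) by auto
      from two_roots_false[OF assms(1) ab assms(2) assms(3) c zi z(3) this that(2) 2] show False .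
    qed
  qed
  have "wzero a b \<theta> = z" unfolding wzero_def
  proof (rule the_equality)
    show "z \<in> {-1<..<1} \<and> fstar a b z \<theta> = 0" using zi z(3) by simp
    show "\<And>y. y \<in> {-1<..<1} \<and> fstar a b y \<theta> = 0 \<Longrightarrow> y = z" using uniq by blast
  qed
  moreover have "z + 2*c < 0" by (rule zero_neg[OF assms(1) ab c zi z(3)])
  ultimately show ?thesis unfolding tau_def c_def by simp
qed

end
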